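(* Let $N=2^n$ and $L=\{f:\{0,1\}^n\to\{0,1\}\ :\ \exists s\in\{0,1\}^n\setminus\{0^n\}\ \forall x\ f(x)=f(x\oplus s)\}$. Every classical probabilistic property tester for $L$ with distance parameter $1/8$ (even with two-sided error) makes $\Omega(\sqrt N)$ queries.
   Context: Functions $f:\{0,1\}^n\to\{0,1\}$ are identified with strings of length $N=2^n$. $f$ is $\epsilon$-far from $L$ if it differs from every $g\in L$ in more than $\epsilon N$ points. A classical property tester with distance parameter $\epsilon$ is a probabilistic (possibly adaptive) algorithm querying values $f(x)$ that accepts every $f\in L$ with probability $\ge2/3$ and every $\epsilon$-far $f$ with probability $\le1/3$; complexity is the number of queries. *)

theory Defs
  imports "HOL-Probability.Probability"
begin

text \<open>Points of {0,1}^n are encoded as natural numbers x < 2^n (binary expansion);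
  bitwise XOR is the library operation xor on nat. A Boolean function on {0,1}^n is a
  function nat => bool, of which only the values on {..<2^n} matter.\<close>

definition in_L :: "nat \<Rightarrow> (nat \<Rightarrow> bool) \<Rightarrow> bool" where
  "in_L n f \<longleftrightarrow> (\<exists>s. 0 < s \<and> s < 2 ^ n \<and> (\<forall>x < 2 ^ n. f x = f (xor x s)))"

definition dist_fun :: "nat \<Rightarrow> (nat \<Rightarrow> bool) \<Rightarrow> (nat \<Rightarrow> bool) \<Rightarrow> nat" where
  "dist_fun n f g = card {x. x < 2 ^ n \<and> f x \<noteq> g x}"

definition far_from_L :: "nat \<Rightarrow> real \<Rightarrow> (nat \<Rightarrow> bool) \<Rightarrow> bool" where
  "far_from_L n eps f \<longleftrightarrow> (\<forall>g. in_L n g \<longrightarrow> real (dist_fun n f g) > eps * 2 ^ n)"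

text \<open>A deterministic adaptive query algorithm: given the answers received so far
  (a bool list) it chooses the next query point (taken modulo 2^n so that it lies
  in the domain), and after all queries it outputs accept/reject from the answers.\<close>
type_synonym det_alg = "(bool list \<Rightarrow> nat) \<times> (bool list \<Rightarrow> bool)"

fun answers :: "nat \<Rightarrow> det_alg \<Rightarrow> (nat \<Rightarrow> bool) \<Rightarrow> nat \<Rightarrow> bool list" where
  "answers n D f 0 = []"
| "answers n D f (Suc k) =
     (let h = answers n D f k in h @ [f (fst D h mod 2 ^ n)])"

definition accepts :: "nat \<Rightarrow> nat \<Rightarrow> det_alg \<Rightarrow> (nat \<Rightarrow> bool) \<Rightarrow> bool" where
  "accepts n q D f \<longleftrightarrow> snd D (answers n D f q)"

text \<open>A probabilistic (adaptive) algorithm making q queries is a probability distribution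
  over deterministic adaptive q-query algorithms.\<close>
definition is_tester :: "nat \<Rightarrow> real \<Rightarrow> nat \<Rightarrow> det_alg pmf \<Rightarrow> bool" where
  "is_tester n eps q A \<longleftrightarrow>
     (\<forall>f. in_L n f \<longrightarrow> measure_pmf.prob A {D. accepts n q D f} \<ge> 2/3) \<and>
     (\<forall>f. far_from_L n eps f \<longrightarrow> measure_pmf.prob A {D. accepts n q D f} \<le> 1/3)"

end

theory Submission
  imports Defs
begin

lemma xor_lt: "(x::nat) < 2^n \<Longrightarrow> s < 2^n \<Longrightarrow> xor x s < 2^n"
  by (metis take_bit_nat_eq_self_iff take_bit_xor)

definition FF :: "nat \<Rightarrow> (nat \<Rightarrow> bool) set" where
  "FF N = {h. \<forall>x. N \<le> x \<longrightarrow> \<not> h x}"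

lemma card_FF_constr:
  assumes "X \<subseteq> {..<N}"
  shows "card {h \<in> FF N. \<forall>x\<in>X. h x = c x} = 2 ^ (N - card X)"
proof -
  have "bij_betw (\<lambda>h. {x. x < N \<and> x \<notin> X \<and> h x}) {h \<in> FF N. \<forall>x\<in>X. h x = c x} (Pow ({..<N} - X))"
  proof (rule bij_betwI[where g="\<lambda>B x. x \<in> B \<or> (x \<in> X \<and> c x)"])
    show "(\<lambda>h. {x. x < N \<and> x \<notin> X \<and> h x}) \<in> {h \<in> FF N. \<forall>x\<in>X. h x = c x} \<rightarrow> Pow ({..<N} - X)"
      by auto
    show "(\<lambda>B x. x \<in> B \<or> x \<in> X \<and> c x) \<in> Pow ({..<N} - X) \<rightarrow> {h \<in> FF N. \<forall>x\<in>X. h x = c x}"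
      using assms by (auto simp: FF_def)
    show "(\<lambda>x. x \<in> {x. x < N \<and> x \<notin> X \<and> h x} \<or> x \<in> X \<and> c x) = h"
      if "h \<in> {h \<in> FF N. \<forall>x\<in>X. h x = c x}" for h
      using that by (auto simp: FF_def fun_eq_iff) (metis not_le)+
    show "{x. x < N \<and> x \<notin> X \<and> (x \<in> B \<or> x \<in> X \<and> c x)} = B" if "B \<in> Pow ({..<N} - X)" for B
      using that by auto
  qed
  then have "card {h \<in> FF N. \<forall>x\<in>X. h x = c x} = card (Pow ({..<N} - X))"
    by (rule bij_betw_same_card)
  also have "\<dots> = 2 ^ (N - card X)"
    using assms by (simp add: card_Pow card_Diff_subset finite_subset)
  finally show ?thesis .
qed

lemma card_FF: "card (FF N) = 2 ^ N"
  using card_FF_constr[of "{}" N] by simp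

lemma finite_FF: "finite (FF N)"
  using card_FF[of N] by (metis card.infinite power_not_zero zero_neq_numeral)

abbreviation qpt :: "nat \<Rightarrow> det_alg \<Rightarrow> bool list \<Rightarrow> nat" where
  "qpt n D b \<equiv> fst D b mod 2 ^ n"

lemma answers_length [simp]: "length (answers n D f k) = k"
  by (induction k) (auto simp: Let_def)

lemma answers_take: "i \<le> k \<Longrightarrow> take i (answers n D f k) = answers n D f i"
proof (induction k)
  case 0 then show ?case by simp
next
  case (Suc k)
  show ?case
  proof (cases "i = Suc k")
    case True then show ?thesis by (simp add: Let_def)
  next
    case False
    then have "i \<le> k" using Suc.prems by simp
    then show ?thesis using Suc.IH by (simp add: Let_def)
  qed
qed

lemma answers_eq:
  "answers n D f k = b \<longleftrightarrow> length b = k \<and> (\<forall>i<k. f (qpt n D (take i b)) = b ! i)"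
proof
  assume h: "answers n D f k = b"
  have "f (qpt n D (take i b)) = b ! i" if "i < k" for i
  proof -
    have "b ! i = take (Suc i) b ! i" by simp
    also have "take (Suc i) b = answers n D f (Suc i)" using h that answers_take[of "Suc i" k n D f] by simp
    also have "answers n D f (Suc i) ! i = f (qpt n D (answers n D f i))"
      by (simp add: Let_def nth_append)
    also have "answers n D f i = take i b" using h that answers_take[of i k n D f] by simp
    finally show ?thesis by simp
  qed
  then show "length b = k \<and> (\<forall>i<k. f (qpt n D (take i b)) = b ! i)" using h by auto
next
  assume "length b = k \<and> (\<forall>i<k. f (qpt n D (take i b)) = b ! i)"
  then show "answers n D f k = b"
  proof (induction k arbitrary: b)
    case 0 then show ?case by simp
  next
    case (Suc k)
    have len: "length b = Suc k" using Suc.prems by simp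
    have "answers n D f k = take k b"
      using Suc.prems by (intro Suc.IH) (auto simp: min_def)
    then show ?case using Suc.prems len
      by (simp add: Let_def take_Suc_conv_app_nth[symmetric])
  qed
qed

lemma card_constr_list:
  assumes "\<forall>i<t. y i < N"
  shows "card {h \<in> FF N. \<forall>i<t. h (y i) = b ! i} =
    (if (\<forall>i<t. \<forall>j<t. y i = y j \<longrightarrow> b ! i = b ! j) then 2 ^ (N - card (y ` {..<t})) else 0)"
proof (cases "\<forall>i<t. \<forall>j<t. y i = y j \<longrightarrow> b ! i = b ! j")
  case True
  define c where "c v = b ! (SOME i. i < t \<and> y i = v)" for v
  have c: "c (y i) = b ! i" if "i < t" for i
  proof -
    have "\<exists>j. j < t \<and> y j = y i" using that by blast
    then have "(SOME j. j < t \<and> y j = y i) < t \<and> y (SOME j. j < t \<and> y j = y i) = y i"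
      by (rule someI_ex)
    then show ?thesis using True that unfolding c_def by metis
  qed
  have "{h \<in> FF N. \<forall>i<t. h (y i) = b ! i} = {h \<in> FF N. \<forall>x\<in>y ` {..<t}. h x = c x}"
    using c by auto
  also have "card \<dots> = 2 ^ (N - card (y ` {..<t}))"
    using assms by (intro card_FF_constr) auto
  finally show ?thesis by (subst if_P[OF True])
next
  case False
  then have "{h \<in> FF N. \<forall>i<t. h (y i) = b ! i} = {}" by (auto; metis)
  then show ?thesis by (subst if_not_P[OF False]) (simp only: card.empty)
qed

lemma card_image_pattern:
  assumes "\<forall>i\<in>A. \<forall>j\<in>A. y i = y j \<longleftrightarrow> z i = z j"
  shows "card (y ` A) = card (z ` A)"
proof -
  define g where "g v = z (SOME i. i \<in> A \<and> y i = v)" for v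
  have g: "g (y i) = z i" if "i \<in> A" for i
  proof -
    have "\<exists>j. j \<in> A \<and> y j = y i" using that by blast
    then have "(SOME j. j \<in> A \<and> y j = y i) \<in> A \<and> y (SOME j. j \<in> A \<and> y j = y i) = y i"
      by (rule someI_ex)
    then show ?thesis using assms that unfolding g_def by metis
  qed
  have "inj_on g (y ` A)"
    using g assms by (auto simp: inj_on_def)
  moreover have "g ` (y ` A) = z ` A"
    using g by (auto simp: image_image)
  ultimately show ?thesis by (metis card_image)
qed

lemma card_constr_pattern:
  assumes "\<forall>i<t. y i < N" "\<forall>i<t. z i < N"
    and "\<forall>i<t. \<forall>j<t. y i = y j \<longleftrightarrow> z i = z j"
  shows "card {h \<in> FF N. \<forall>i<t. h (y i) = b ! i} = card {h \<in> FF N. \<forall>i<t. h (z i) = b ! i}"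
proof -
  have e: "card (y ` {..<t}) = card (z ` {..<t})"
    using assms(3) by (intro card_image_pattern) auto
  have p: "(\<forall>i<t. \<forall>j<t. y i = y j \<longrightarrow> b ! i = b ! j) \<longleftrightarrow> (\<forall>i<t. \<forall>j<t. z i = z j \<longrightarrow> b ! i = b ! j)"
    using assms(3) by blast
  show ?thesis
    unfolding card_constr_list[OF assms(1)] card_constr_list[OF assms(2)] by (simp only: e p)
qed

definition rho :: "nat \<Rightarrow> nat \<Rightarrow> nat" where
  "rho s x = min x (xor x s)"

lemma rho_xor: "rho s (xor x s) = rho s x"
  by (simp add: rho_def xor.assoc min.commute)

lemma rho_lt: "x < N \<Longrightarrow> rho s x < N"
  by (simp add: rho_def)

lemma rho_eq_imp: "rho s x = rho s y \<Longrightarrow> x \<noteq> y \<Longrightarrow> xor x y = s"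
proof -
  assume a: "rho s x = rho s y" "x \<noteq> y"
  have x1: "xor x (xor x s) = s" by (simp flip: xor.assoc)
  have x2: "xor (xor y s) y = s" by (metis xor.commute xor.assoc xor_self_eq xor.right_neutral)
  have m: "min x (xor x s) = min y (xor y s)" using a(1) by (simp add: rho_def)
  have "x = y \<or> x = xor y s \<or> xor x s = y \<or> xor x s = xor y s"
    using m unfolding min_def by (auto split: if_splits)
  moreover have "xor x s = xor y s \<Longrightarrow> x = y"
  proof -
    assume "xor x s = xor y s"
    then have "xor (xor x s) s = xor (xor y s) s" by simp
    then show "x = y" by (simp add: xor.assoc)
  qed
  ultimately show ?thesis using a(2) x1 x2 by auto
qed

definition coll :: "nat \<Rightarrow> det_alg \<Rightarrow> nat \<Rightarrow> bool list \<Rightarrow> bool" where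
  "coll n D s b \<longleftrightarrow> (\<exists>i<length b. \<exists>j<length b. xor (qpt n D (take i b)) (qpt n D (take j b)) = s)"

lemma transfer_one:
  assumes "length b = t" "\<not> coll n D s b"
  shows "card {h \<in> FF (2^n). answers n D (\<lambda>x. h (rho s x)) t = b} = card {h \<in> FF (2^n). answers n D h t = b}"
proof -
  have "card {h \<in> FF (2^n). answers n D (\<lambda>x. h (rho s x)) t = b}
      = card {h \<in> FF (2^n). \<forall>i<t. h (rho s (qpt n D (take i b))) = b ! i}"
    using assms(1) by (simp add: answers_eq)
  also have "\<dots> = card {h \<in> FF (2^n). \<forall>i<t. h (qpt n D (take i b)) = b ! i}"
    using assms by (intro card_constr_pattern) (auto simp: rho_lt coll_def dest: rho_eq_imp)
  also have "\<dots> = card {h \<in> FF (2^n). answers n D h t = b}"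
    using assms(1) by (simp add: answers_eq)
  finally show ?thesis .
qed

lemma card_by_transcript:
  fixes G :: "(nat \<Rightarrow> bool) \<Rightarrow> bool list"
  assumes "\<And>h. length (G h) = t"
  shows "card {h \<in> FF N. P (G h)} = (\<Sum>b\<in>{b. length b = t \<and> P b}. card {h \<in> FF N. G h = b})"
proof -
  have fin: "finite {b::bool list. length b = t \<and> P b}"
    by (rule finite_subset[OF _ finite_lists_length_eq[of "UNIV::bool set" t]]) auto
  have "{h \<in> FF N. P (G h)} = (\<Union>b\<in>{b. length b = t \<and> P b}. {h \<in> FF N. G h = b})"
    using assms by auto
  also have "card \<dots> = (\<Sum>b\<in>{b. length b = t \<and> P b}. card {h \<in> FF N. G h = b})"
    by (rule card_UN_disjoint[OF fin]) (auto intro: finite_subset[OF _ finite_FF])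
  finally show ?thesis .
qed

lemma transfer:
  assumes "\<And>b. length b = t \<Longrightarrow> P b \<Longrightarrow> \<not> coll n D s b"
  shows "card {h \<in> FF (2^n). P (answers n D (\<lambda>x. h (rho s x)) t)} = card {h \<in> FF (2^n). P (answers n D h t)}"
proof -
  have "card {h \<in> FF (2^n). P (answers n D (\<lambda>x. h (rho s x)) t)}
     = (\<Sum>b\<in>{b. length b = t \<and> P b}. card {h \<in> FF (2^n). answers n D (\<lambda>x. h (rho s x)) t = b})"
    by (rule card_by_transcript) simp
  also have "\<dots> = (\<Sum>b\<in>{b. length b = t \<and> P b}. card {h \<in> FF (2^n). answers n D h t = b})"
    using assms by (intro sum.cong refl transfer_one) auto
  also have "\<dots> = card {h \<in> FF (2^n). P (answers n D h t)}"
    by (rule card_by_transcript[symmetric]) simp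
  finally show ?thesis .
qed

definition newc :: "nat \<Rightarrow> det_alg \<Rightarrow> nat \<Rightarrow> bool list \<Rightarrow> bool" where
  "newc n D s b \<longleftrightarrow> (\<exists>j<length b. xor (qpt n D b) (qpt n D (take j b)) = s)"

lemma ex2_Suc:
  "(\<exists>i<Suc L. \<exists>j<Suc L. P i j) \<longleftrightarrow> (\<exists>i<L. \<exists>j<L. P i j) \<or> (\<exists>j<L. P L j) \<or> (\<exists>i<L. P i L) \<or> P L L"
  by (auto simp: less_Suc_eq)

lemma coll_snoc:
  assumes "s \<noteq> 0"
  shows "coll n D s (b @ [a]) \<longleftrightarrow> coll n D s b \<or> newc n D s b"
proof -
  let ?x = "\<lambda>i. qpt n D (take i b)"
  have "coll n D s (b @ [a]) \<longleftrightarrow> (\<exists>i<Suc (length b). \<exists>j<Suc (length b). xor (?x i) (?x j) = s)"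
  proof -
    have tk: "\<And>i. i < Suc (length b) \<Longrightarrow> take i (b @ [a]) = take i b" by simp
    show ?thesis unfolding coll_def using tk by (metis length_append_singleton)
  qed
  also have "\<dots> \<longleftrightarrow> (\<exists>i<length b. \<exists>j<length b. xor (?x i) (?x j) = s) \<or>
      (\<exists>j<length b. xor (?x (length b)) (?x j) = s) \<or> (\<exists>i<length b. xor (?x i) (?x (length b)) = s) \<or>
      xor (?x (length b)) (?x (length b)) = s"
    by (rule ex2_Suc[where P="\<lambda>i j. xor (?x i) (?x j) = s"])
  also have "\<dots> \<longleftrightarrow> coll n D s b \<or> newc n D s b"
    using assms unfolding coll_def newc_def by (auto simp: xor.commute)
  finally show ?thesis .
qed

lemma coll_first:
  assumes "s \<noteq> 0" "coll n D s (answers n D g q)"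
  shows "\<exists>t<q. \<not> coll n D s (answers n D g t) \<and> newc n D s (answers n D g t)"
  using assms(2)
proof (induction q)
  case 0 then show ?case by (simp add: coll_def)
next
  case (Suc q)
  then have "coll n D s (answers n D g q) \<or> newc n D s (answers n D g q)"
    using coll_snoc[OF assms(1)] by (simp add: Let_def)
  then show ?case using Suc.IH by (metis less_Suc_eq)
qed

lemma main_D:
  assumes "s \<noteq> 0"
  shows "card {h \<in> FF (2^n). snd D (answers n D (\<lambda>x. h (rho s x)) q)}
    \<le> card {h \<in> FF (2^n). snd D (answers n D h q)} + (\<Sum>t<q. card {h \<in> FF (2^n). newc n D s (answers n D h t)})"
proof -
  let ?g = "\<lambda>h x. h (rho s x)"
  have sub: "{h \<in> FF (2^n). snd D (answers n D (?g h) q)} \<subseteq>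
     {h \<in> FF (2^n). (\<lambda>b. snd D b \<and> \<not> coll n D s b) (answers n D (?g h) q)} \<union>
     (\<Union>t<q. {h \<in> FF (2^n). (\<lambda>b. \<not> coll n D s b \<and> newc n D s b) (answers n D (?g h) t)})"
  proof
    fix h assume h: "h \<in> {h \<in> FF (2^n). snd D (answers n D (?g h) q)}"
    show "h \<in> {h \<in> FF (2^n). (\<lambda>b. snd D b \<and> \<not> coll n D s b) (answers n D (?g h) q)} \<union>
     (\<Union>t<q. {h \<in> FF (2^n). (\<lambda>b. \<not> coll n D s b \<and> newc n D s b) (answers n D (?g h) t)})"
    proof (cases "coll n D s (answers n D (?g h) q)")
      case True
      then obtain t where "t < q" "\<not> coll n D s (answers n D (?g h) t)" "newc n D s (answers n D (?g h) t)"
        using coll_first[OF assms] by blast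
      then show ?thesis using h by blast
    next
      case False
      then show ?thesis using h by blast
    qed
  qed
  have "card {h \<in> FF (2^n). snd D (answers n D (?g h) q)} \<le>
     card ({h \<in> FF (2^n). (\<lambda>b. snd D b \<and> \<not> coll n D s b) (answers n D (?g h) q)} \<union>
     (\<Union>t<q. {h \<in> FF (2^n). (\<lambda>b. \<not> coll n D s b \<and> newc n D s b) (answers n D (?g h) t)}))"
    by (rule card_mono[OF _ sub]) (auto intro: finite_subset[OF _ finite_FF])
  also have "\<dots> \<le> card {h \<in> FF (2^n). (\<lambda>b. snd D b \<and> \<not> coll n D s b) (answers n D (?g h) q)} +
     card (\<Union>t<q. {h \<in> FF (2^n). (\<lambda>b. \<not> coll n D s b \<and> newc n D s b) (answers n D (?g h) t)})"
    by (rule card_Un_le)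
  also have "\<dots> \<le> card {h \<in> FF (2^n). (\<lambda>b. snd D b \<and> \<not> coll n D s b) (answers n D (?g h) q)} +
     (\<Sum>t<q. card {h \<in> FF (2^n). (\<lambda>b. \<not> coll n D s b \<and> newc n D s b) (answers n D (?g h) t)})"
    by (intro add_left_mono card_UN_le) simp
  also have "\<dots> = card {h \<in> FF (2^n). (\<lambda>b. snd D b \<and> \<not> coll n D s b) (answers n D h q)} +
     (\<Sum>t<q. card {h \<in> FF (2^n). (\<lambda>b. \<not> coll n D s b \<and> newc n D s b) (answers n D h t)})"
    by (intro arg_cong2[where f="(+)"] sum.cong refl transfer) auto
  also have "\<dots> \<le> card {h \<in> FF (2^n). snd D (answers n D h q)} +
     (\<Sum>t<q. card {h \<in> FF (2^n). newc n D s (answers n D h t)})"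
    by (intro add_mono sum_mono card_mono) (auto intro: finite_subset[OF _ finite_FF])
  finally show ?thesis .
qed

lemma card_filter_sum:
  assumes "finite A"
  shows "card {x \<in> A. P x} = (\<Sum>x\<in>A. if P x then 1 else 0)"
  unfolding card_eq_sum[of "{x \<in> A. P x}"] by (rule sum.inter_filter[OF assms])

lemma newc_sum:
  "(\<Sum>s\<in>{1..<N}. card {h \<in> FF M. newc n D s (answers n D h t)}) \<le> 2 ^ M * t"
proof -
  have "(\<Sum>s\<in>{1..<N}. card {h \<in> FF M. newc n D s (answers n D h t)})
      = (\<Sum>s\<in>{1..<N}. \<Sum>h\<in>FF M. if newc n D s (answers n D h t) then 1 else 0)"
    by (intro sum.cong refl card_filter_sum finite_FF)
  also have "\<dots> = (\<Sum>h\<in>FF M. \<Sum>s\<in>{1..<N}. if newc n D s (answers n D h t) then 1 else 0)"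
    by (rule sum.swap)
  also have "\<dots> \<le> (\<Sum>h\<in>FF M. t)"
  proof (rule sum_mono)
    fix h
    let ?b = "answers n D h t"
    have "(\<Sum>s\<in>{1..<N}. if newc n D s ?b then 1 else 0) = card {s\<in>{1..<N}. newc n D s ?b}"
      by (rule card_filter_sum[symmetric]) simp
    also have "\<dots> \<le> card ((\<lambda>j. xor (qpt n D ?b) (qpt n D (take j ?b))) ` {..<t})"
      by (intro card_mono) (auto simp: newc_def)
    also have "\<dots> \<le> t" using card_image_le[of "{..<t}"] by simp
    finally show "(\<Sum>s\<in>{1..<N}. if newc n D s ?b then 1 else 0) \<le> t" .
  qed
  also have "\<dots> = 2 ^ M * t" by (simp add: card_FF)
  finally show ?thesis .
qed

lemma key_D:
  "(\<Sum>s\<in>{1..<2^n}. card {h \<in> FF (2^n). snd D (answers n D (\<lambda>x. h (rho s x)) q)})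
    \<le> (2^n - 1) * card {h \<in> FF (2^n). snd D (answers n D h q)} + 2 ^ (2^n) * q^2"
proof -
  let ?A = "card {h \<in> FF (2^n). snd D (answers n D h q)}"
  let ?c = "\<lambda>s t. card {h \<in> FF (2^n). newc n D s (answers n D h t)}"
  have "(\<Sum>s\<in>{1..<2^n}. card {h \<in> FF (2^n). snd D (answers n D (\<lambda>x. h (rho s x)) q)})
      \<le> (\<Sum>s\<in>{1..<(2::nat)^n}. ?A + (\<Sum>t<q. ?c s t))"
    by (intro sum_mono main_D) auto
  also have "\<dots> = (2^n - 1) * ?A + (\<Sum>t<q. \<Sum>s\<in>{1..<(2::nat)^n}. ?c s t)"
  proof -
    have e1: "(\<Sum>s\<in>{1..<(2::nat)^n}. ?A) = (2^n - 1) * ?A"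
      by simp
    have e2: "(\<Sum>s\<in>{1..<(2::nat)^n}. \<Sum>t<q. ?c s t) = (\<Sum>t<q. \<Sum>s\<in>{1..<(2::nat)^n}. ?c s t)"
      by (rule sum.swap)
    show ?thesis unfolding sum.distrib e1 e2 ..
  qed
  also have "\<dots> \<le> (2^n - 1) * ?A + (\<Sum>t<q. 2 ^ (2^n) * q)"
  proof -
    have "(\<Sum>t<q. \<Sum>s\<in>{1..<(2::nat)^n}. ?c s t) \<le> (\<Sum>t<q. 2 ^ (2^n) * t)"
      by (intro sum_mono newc_sum)
    also have "\<dots> \<le> (\<Sum>t<q. 2 ^ (2^n) * q)"
      by (intro sum_mono) simp
    finally show ?thesis by (rule add_left_mono)
  qed
  also have "\<dots> = (2^n - 1) * ?A + 2 ^ (2^n) * q^2"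
    by (simp only: sum_constant card_lessThan power2_eq_square) (simp add: algebra_simps)
  finally show ?thesis .
qed

lemma xor_xor_cancel [simp]: "xor (xor x s) s = (x::nat)"
  by (simp add: xor.assoc)

lemma xor_ne_self: "s \<noteq> 0 \<Longrightarrow> xor x s \<noteq> (x::nat)"
proof
  assume "s \<noteq> 0" "xor x s = x"
  then have "xor (xor x s) x = xor x x" by simp
  then show False using \<open>s \<noteq> 0\<close> by (metis xor.commute xor_xor_cancel xor_self_eq)
qed

definition NR :: "nat \<Rightarrow> nat \<Rightarrow> nat set" where
  "NR N s = {x. x < N \<and> xor x s < x}"

lemma card_NR:
  assumes "0 < s" "s < 2^n"
  shows "2 * card (NR (2^n) s) = 2^n"
proof -
  let ?R = "{x. x < 2^n \<and> x < xor x s}"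
  have "bij_betw (\<lambda>x. xor x s) (NR (2^n) s) ?R"
    by (rule bij_betwI[where g="\<lambda>x. xor x s"]) (auto simp: NR_def xor_lt assms)
  then have c: "card (NR (2^n) s) = card ?R" by (rule bij_betw_same_card)
  have u: "NR (2^n) s \<union> ?R = {..<2^n}"
    using xor_ne_self[of s] assms by (auto simp: NR_def) (metis nat_neq_iff)
  have "card (NR (2^n) s \<union> ?R) = card (NR (2^n) s) + card ?R"
    by (rule card_Un_disjoint) (auto simp: NR_def)
  then show ?thesis using u c by simp
qed

lemma card_subsets_le:
  assumes "finite B"
  shows "card {A. A \<subseteq> B \<and> card A \<le> k} = (\<Sum>j\<le>k. card B choose j)"
proof -
  have "{A. A \<subseteq> B \<and> card A \<le> k} = (\<Union>j\<in>{..k}. {A. A \<subseteq> B \<and> card A = j})" by auto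
  also have "card \<dots> = (\<Sum>j\<le>k. card {A. A \<subseteq> B \<and> card A = j})"
    by (rule card_UN_disjoint) (auto intro: finite_subset[OF _ finite_Pow_iff[THEN iffD2, OF assms]])
  also have "\<dots> = (\<Sum>j\<le>k. card B choose j)"
    using assms by (simp add: n_subsets)
  finally show ?thesis .
qed

lemma count_small_support:
  assumes "B \<subseteq> {..<N}"
  shows "card {h \<in> FF N. card {x \<in> B. h x} \<le> k} \<le> (\<Sum>j\<le>k. card B choose j) * 2 ^ (N - card B)"
proof -
  have fB: "finite B" using assms finite_subset by blast
  let ?f = "\<lambda>h. ({x \<in> B. h x}, {x. x < N \<and> x \<notin> B \<and> h x})"
  have "inj_on ?f {h \<in> FF N. card {x \<in> B. h x} \<le> k}"
  proof (rule inj_onI)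
    fix h1 h2 assume h: "h1 \<in> {h \<in> FF N. card {x \<in> B. h x} \<le> k}" "h2 \<in> {h \<in> FF N. card {x \<in> B. h x} \<le> k}"
      "?f h1 = ?f h2"
    show "h1 = h2"
    proof
      fix x
      show "h1 x = h2 x"
      proof (cases "x < N")
        case True
        then show ?thesis using h(3) by (cases "x \<in> B") (auto simp: set_eq_iff)
      next
        case False
        then show ?thesis using h(1,2) by (auto simp: FF_def)
      qed
    qed
  qed
  moreover have "?f ` {h \<in> FF N. card {x \<in> B. h x} \<le> k} \<subseteq> {A. A \<subseteq> B \<and> card A \<le> k} \<times> Pow ({..<N} - B)"
    by auto
  ultimately have "card {h \<in> FF N. card {x \<in> B. h x} \<le> k} \<le> card ({A. A \<subseteq> B \<and> card A \<le> k} \<times> Pow ({..<N} - B))"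
    by (metis (no_types, lifting) card_image card_mono finite_Pow_iff finite_SigmaI finite_lessThan finite_Diff fB finite_subset Pow_iff mem_Collect_eq subsetI)
  also have "\<dots> = (\<Sum>j\<le>k. card B choose j) * 2 ^ (N - card B)"
    using fB assms by (simp add: card_cartesian_product card_subsets_le card_Pow card_Diff_subset)
  finally show ?thesis .
qed

lemma bad_s_count:
  assumes s: "0 < s" "s < 2^n"
  shows "card {h \<in> FF (2^n). card {x. x < 2^n \<and> h x \<noteq> h (xor x s)} \<le> 2 * k}
    \<le> (\<Sum>j\<le>k. card (NR (2^n) s) choose j) * 2 ^ (2^n - card (NR (2^n) s))"
proof -
  let ?N = "(2::nat)^n"
  let ?B = "NR ?N s"
  let ?E = "\<lambda>h. {x. x < ?N \<and> h x \<noteq> h (xor x s)}"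
  define Phi where "Phi h x = (if x \<in> ?B then h x \<noteq> h (xor x s) else h x)" for h x
  have notB: "xor x s \<notin> ?B" if "x \<in> ?B" for x
    using that by (auto simp: NR_def)
  have inj: "inj_on Phi (FF ?N)"
  proof (rule inj_onI)
    fix h1 h2 assume "h1 \<in> FF ?N" "h2 \<in> FF ?N" and e: "Phi h1 = Phi h2"
    show "h1 = h2"
    proof
      fix x
      show "h1 x = h2 x"
      proof (cases "x \<in> ?B")
        case True
        have "h1 (xor x s) = h2 (xor x s)"
          using e notB[OF True] unfolding Phi_def by (metis (full_types))
        moreover have "(h1 x \<noteq> h1 (xor x s)) = (h2 x \<noteq> h2 (xor x s))"
          using e True unfolding Phi_def by (metis (full_types))
        ultimately show ?thesis by blast
      next
        case False
        then show ?thesis using e unfolding Phi_def by (metis (full_types))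
      qed
    qed
  qed
  have key: "card {x \<in> ?B. Phi h x} \<le> k" if "card (?E h) \<le> 2 * k" for h
  proof -
    have eq: "{x \<in> ?B. Phi h x} = ?E h \<inter> ?B"
      by (auto simp: Phi_def NR_def)
    have fin: "finite (?E h)" by auto
    have sub: "(?E h \<inter> ?B) \<union> (\<lambda>x. xor x s) ` (?E h \<inter> ?B) \<subseteq> ?E h"
      using s by (auto simp: NR_def xor_lt)
    have disj: "(?E h \<inter> ?B) \<inter> (\<lambda>x. xor x s) ` (?E h \<inter> ?B) = {}"
      using notB by auto
    have ci: "card ((\<lambda>x. xor x s) ` (?E h \<inter> ?B)) = card (?E h \<inter> ?B)"
      by (rule card_image) (auto simp: inj_on_def dest: arg_cong[where f="\<lambda>y. xor y s"])
    have "card ((?E h \<inter> ?B) \<union> (\<lambda>x. xor x s) ` (?E h \<inter> ?B)) = 2 * card (?E h \<inter> ?B)"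
    proof -
      have f1: "finite (?E h \<inter> ?B)" using fin by blast
      have f2: "finite ((\<lambda>x. xor x s) ` (?E h \<inter> ?B))" using f1 by blast
      show ?thesis using card_Un_disjoint[OF f1 f2 disj] ci by linarith
    qed
    then have "2 * card (?E h \<inter> ?B) \<le> card (?E h)"
      using card_mono[OF fin sub] by linarith
    then show ?thesis using that eq by simp
  qed
  have "card {h \<in> FF ?N. card (?E h) \<le> 2 * k} = card (Phi ` {h \<in> FF ?N. card (?E h) \<le> 2 * k})"
    by (rule card_image[symmetric]) (rule inj_on_subset[OF inj], auto)
  also have "\<dots> \<le> card {h \<in> FF ?N. card {x \<in> ?B. h x} \<le> k}"
  proof (rule card_mono)
    show "finite {h \<in> FF ?N. card {x \<in> ?B. h x} \<le> k}"
      by (rule finite_subset[OF _ finite_FF]) auto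
    show "Phi ` {h \<in> FF ?N. card (?E h) \<le> 2 * k} \<subseteq> {h \<in> FF ?N. card {x \<in> ?B. h x} \<le> k}"
    proof (rule image_subsetI)
      fix h assume h: "h \<in> {h \<in> FF ?N. card (?E h) \<le> 2 * k}"
      have "Phi h \<in> FF ?N" using h by (auto simp: FF_def Phi_def NR_def)
      moreover have "card {x \<in> ?B. Phi h x} \<le> k" using h key by blast
      ultimately show "Phi h \<in> {h \<in> FF ?N. card {x \<in> ?B. h x} \<le> k}" by blast
    qed
  qed
  also have "\<dots> \<le> (\<Sum>j\<le>k. card ?B choose j) * 2 ^ (?N - card ?B)"
    by (rule count_small_support) (auto simp: NR_def)
  finally show ?thesis .
qed

lemma binom_bound:
  assumes "k \<le> m"
  shows "3 ^ m * (\<Sum>j\<le>k. m choose j) \<le> 3 ^ k * (4::nat) ^ m"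
proof -
  have "3 ^ m * (\<Sum>j\<le>k. m choose j) = (\<Sum>j\<le>k. 3 ^ m * (m choose j))"
    by (simp add: sum_distrib_left)
  also have "\<dots> \<le> (\<Sum>j\<le>k. 3 ^ k * ((m choose j) * 3 ^ (m - j)))"
  proof (rule sum_mono)
    fix j assume "j \<in> {..k}"
    then have "j \<le> k" by simp
    then have "(3::nat) ^ m \<le> 3 ^ k * 3 ^ (m - j)"
      using assms by (simp flip: power_add)
    then show "3 ^ m * (m choose j) \<le> 3 ^ k * ((m choose j) * 3 ^ (m - j))"
      by (metis mult.assoc mult.commute mult_le_mono1)
  qed
  also have "\<dots> = 3 ^ k * (\<Sum>j\<le>k. (m choose j) * 3 ^ (m - j))"
    by (simp add: sum_distrib_left)
  also have "\<dots> \<le> 3 ^ k * (\<Sum>j\<le>m. (m choose j) * 3 ^ (m - j))"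
    using assms by (intro mult_left_mono sum_mono2) auto
  also have "(\<Sum>j\<le>m. (m choose j) * 3 ^ (m - j)) = (1 + 3::nat) ^ m"
    using binomial_ring[of "1::nat" 3 m] by simp
  finally show ?thesis by simp
qed

lemma num_ineq: "16 \<le> k \<Longrightarrow> 48 * k * 16 ^ k \<le> (27::nat) ^ k"
proof (induction k rule: dec_induct)
  case base then show ?case by simp
next
  case (step k)
  have "48 * Suc k * 16 ^ Suc k = 16 * (Suc k) * (48 * 16 ^ k)" by simp
  also have "\<dots> \<le> 27 * k * (48 * 16 ^ k)"
    using step.hyps by (intro mult_right_mono) auto
  also have "\<dots> = 27 * (48 * k * 16 ^ k)" by simp
  also have "\<dots> \<le> 27 * 27 ^ k" using step.IH by simp
  finally show ?case by simp
qed

lemma notfar_bad: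
  assumes "\<not> far_from_L n (1/8) h" "3 \<le> n"
  shows "\<exists>s\<in>{1..<2^n}. card {x. x < 2^n \<and> h x \<noteq> h (xor x s)} \<le> 2 * 2^(n-3)"
proof -
  obtain g where g: "in_L n g" "real (dist_fun n h g) \<le> 1/8 * 2^n"
    using assms(1) unfolding far_from_L_def by auto
  obtain s where s: "0 < s" "s < 2^n" "\<forall>x<2^n. g x = g (xor x s)"
    using g(1) unfolding in_L_def by auto
  have "(2::real)^n = 2^(n-3) * 2^3"
    unfolding power_add[symmetric] using assms(2) by simp
  then have "real (dist_fun n h g) \<le> real (2^(n-3))" using g(2) by simp
  then have d: "dist_fun n h g \<le> 2^(n-3)" by linarith
  let ?D = "{x. x < 2 ^ n \<and> h x \<noteq> g x}"
  have sub: "{x. x < 2^n \<and> h x \<noteq> h (xor x s)} \<subseteq> ?D \<union> (\<lambda>x. xor x s) ` ?D"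
  proof
    fix x assume x: "x \<in> {x. x < 2^n \<and> h x \<noteq> h (xor x s)}"
    show "x \<in> ?D \<union> (\<lambda>x. xor x s) ` ?D"
    proof (cases "h x = g x")
      case True
      have "xor x s < 2^n" using x s xor_lt by auto
      moreover have "h (xor x s) \<noteq> g (xor x s)" using True x s(3) by auto
      ultimately have "xor x s \<in> ?D" by simp
      then have "xor (xor x s) s \<in> (\<lambda>x. xor x s) ` ?D" by (rule imageI)
      then show ?thesis by simp
    next
      case False
      then show ?thesis using x by simp
    qed
  qed
  have "card {x. x < 2^n \<and> h x \<noteq> h (xor x s)} \<le> card (?D \<union> (\<lambda>x. xor x s) ` ?D)"
    by (rule card_mono[OF _ sub]) auto
  also have "\<dots> \<le> card ?D + card ((\<lambda>x. xor x s) ` ?D)" by (rule card_Un_le)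
  also have "\<dots> \<le> card ?D + card ?D" using card_image_le[of ?D "\<lambda>x. xor x s"] by simp
  also have "card ?D = dist_fun n h g" by (simp add: dist_fun_def)
  finally have "card {x. x < 2^n \<and> h x \<noteq> h (xor x s)} \<le> 2 * 2^(n-3)" using d by linarith
  then show ?thesis using s by auto
qed

lemma notfar_count:
  assumes n: "7 \<le> n"
  shows "6 * card {h \<in> FF (2^n). \<not> far_from_L n (1/8) h} \<le> 2 ^ (2^n)"
proof -
  define k where "k = (2::nat)^(n-3)"
  have N: "(2::nat)^n = 8 * k"
  proof -
    have "(2::nat)^n = 2^(n-3) * 2^3" unfolding power_add[symmetric] using n by simp
    then show ?thesis unfolding k_def by simp
  qed
  have k16: "16 \<le> k"
  proof -
    have "(2::nat)^4 \<le> 2^(n-3)" using n by (intro power_increasing) auto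
    then show ?thesis by (simp add: k_def)
  qed
  let ?E = "\<lambda>s h. card {x. x < 2^n \<and> h x \<noteq> h (xor x s)}"
  have m: "card (NR (2^n) s) = 4 * k" if "s \<in> {1..<2^n}" for s
    using card_NR[of s n] that N by auto
  have sub: "{h \<in> FF (2^n). \<not> far_from_L n (1/8) h} \<subseteq> (\<Union>s\<in>{1..<2^n}. {h \<in> FF (2^n). ?E s h \<le> 2 * k})"
    using notfar_bad[of n] n unfolding k_def by fastforce
  have "card {h \<in> FF (2^n). \<not> far_from_L n (1/8) h} \<le> card (\<Union>s\<in>{1..<2^n}. {h \<in> FF (2^n). ?E s h \<le> 2 * k})"
    by (rule card_mono[OF _ sub]) (auto intro: finite_subset[OF _ finite_FF])
  also have "\<dots> \<le> (\<Sum>s\<in>{1..<2^n}. card {h \<in> FF (2^n). ?E s h \<le> 2 * k})"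
    by (rule card_UN_le) simp
  also have "\<dots> \<le> (\<Sum>s\<in>{1..<(2::nat)^n}. (\<Sum>j\<le>k. 4 * k choose j) * 2 ^ (2^n - 4 * k))"
  proof (rule sum_mono)
    fix s assume s: "s \<in> {1..<(2::nat)^n}"
    show "card {h \<in> FF (2^n). ?E s h \<le> 2 * k} \<le> (\<Sum>j\<le>k. 4 * k choose j) * 2 ^ (2^n - 4 * k)"
      using bad_s_count[of s n k] s m[OF s] by auto
  qed
  also have "\<dots> = (2^n - 1) * ((\<Sum>j\<le>k. 4 * k choose j) * 2 ^ (4 * k))"
    using N by simp
  finally have c1: "card {h \<in> FF (2^n). \<not> far_from_L n (1/8) h} \<le> (8 * k - 1) * ((\<Sum>j\<le>k. 4 * k choose j) * 2 ^ (4 * k))"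
    using N by simp
  have bb: "3 ^ (4 * k) * (\<Sum>j\<le>k. 4 * k choose j) \<le> 3 ^ k * 4 ^ (4 * k)"
    by (rule binom_bound) simp
  have "6 * 3 ^ (4 * k) * card {h \<in> FF (2^n). \<not> far_from_L n (1/8) h}
      \<le> 6 * 3 ^ (4 * k) * ((8 * k - 1) * ((\<Sum>j\<le>k. 4 * k choose j) * 2 ^ (4 * k)))"
    using c1 by (intro mult_left_mono) auto
  also have "\<dots> \<le> 6 * (8 * k) * (3 ^ (4 * k) * (\<Sum>j\<le>k. 4 * k choose j)) * 2 ^ (4 * k)"
    by (simp add: algebra_simps)
  also have "\<dots> \<le> 6 * (8 * k) * (3 ^ k * 4 ^ (4 * k)) * 2 ^ (4 * k)"
    using bb by (intro mult_right_mono mult_left_mono) auto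
  also have "\<dots> = (48 * k * 16 ^ k) * (3 ^ k * 256 ^ k)"
  proof -
    have p1: "(4::nat)^(4*k) = 256^k" by (simp add: power_mult)
    have p2: "(2::nat)^(4*k) = 16^k" by (simp add: power_mult)
    show ?thesis unfolding p1 p2 by (simp add: algebra_simps)
  qed
  also have "\<dots> \<le> 27 ^ k * (3 ^ k * 256 ^ k)"
    using num_ineq[OF k16] by (intro mult_right_mono) auto
  also have "\<dots> = 3 ^ (4 * k) * 2 ^ (2^n)"
    using N by (simp add: power_mult power_mult_distrib[symmetric])
  finally have "3 ^ (4 * k) * (6 * card {h \<in> FF (2^n). \<not> far_from_L n (1/8) h}) \<le> 3 ^ (4 * k) * 2 ^ (2^n)"
    by (simp add: algebra_simps)
  then show ?thesis by simp
qed

lemma pmf_meas: "(f :: 'a \<Rightarrow> real) \<in> borel_measurable (measure_pmf A)"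
  by (subst measurable_cong_sets[OF sets_measure_pmf_count_space refl]) simp

lemma pmf_integrable_bdd:
  assumes "\<And>x. \<bar>(f :: 'a \<Rightarrow> real) x\<bar> \<le> B"
  shows "integrable (measure_pmf A) f"
  by (rule measure_pmf.integrable_const_bound[where B=B]) (use assms pmf_meas in auto)

lemma prob_as_integral:
  "measure_pmf.prob A {D. P D} = measure_pmf.expectation A (\<lambda>D. if P D then 1 else 0)"
proof -
  have "(\<lambda>D. if P D then 1 else 0::real) = indicator {D. P D}" by (auto simp: indicator_def fun_eq_iff)
  then show ?thesis by (simp add: integral_indicator)
qed

lemma sum_indicator_card:
  assumes "finite S"
  shows "(\<Sum>h\<in>S. if P h then 1 else 0::real) = real (card {h \<in> S. P h})"
  unfolding card_filter_sum[OF assms] of_nat_sum by (intro sum.cong) auto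

lemma rho_in_L:
  assumes "0 < s" "s < 2^n"
  shows "in_L n (\<lambda>x. h (rho s x))"
  unfolding in_L_def using assms by (auto simp: rho_xor)

theorem theorem4p2:
  shows "\<exists>c::real. c > 0 \<and> (\<exists>n0. \<forall>n \<ge> n0. \<forall>q A.
           is_tester n (1/8) q A \<longrightarrow> real q \<ge> c * sqrt (2 ^ n))"
proof (intro exI[of _ "1/4"] conjI exI[of _ 7] allI impI)
  show "(0::real) < 1/4" by simp
  fix n q A assume n: "7 \<le> n" and T: "is_tester n (1/8) q A"
  define N where "N = (2::nat)^n"
  have N2: "2 \<le> N"
  proof -
    have "(2::nat)^1 \<le> 2^n" by (rule power_increasing) (use n in auto)
    then show ?thesis unfolding N_def by simp
  qed
  let ?S = "{1..<N}"
  let ?F = "FF N"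
  let ?X = "\<lambda>f D. if accepts n q D f then 1 else (0::real)"
  let ?P = "\<lambda>f. measure_pmf.prob A {D. accepts n q D f}"
  have Pacc: "?P f = measure_pmf.expectation A (?X f)" for f by (rule prob_as_integral)
  have int: "integrable (measure_pmf A) (?X f)" for f by (rule pmf_integrable_bdd[where B=1]) auto
  have cS: "card ?S = N - 1" by simp
  have cF: "card ?F = 2^N" by (rule card_FF)
  have Y: "real (N - 1) * 2^N * (2/3) \<le> (\<Sum>s\<in>?S. \<Sum>h\<in>?F. ?P (\<lambda>x. h (rho s x)))"
  proof -
    have "(\<Sum>s\<in>?S. \<Sum>h\<in>?F. (2/3::real)) \<le> (\<Sum>s\<in>?S. \<Sum>h\<in>?F. ?P (\<lambda>x. h (rho s x)))"
    proof (intro sum_mono)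
      fix s h assume s: "s \<in> ?S"
      have "in_L n (\<lambda>x. h (rho s x))" using s by (intro rho_in_L) (auto simp: N_def)
      then show "2/3 \<le> ?P (\<lambda>x. h (rho s x))" using T unfolding is_tester_def by blast
    qed
    then show ?thesis using cS cF by simp
  qed
  have U: "(\<Sum>h\<in>?F. ?P h) \<le> 2^N / 3 + real (card {h \<in> ?F. \<not> far_from_L n (1/8) h})"
  proof -
    have "(\<Sum>h\<in>?F. ?P h) \<le> (\<Sum>h\<in>?F. 1/3 + (if \<not> far_from_L n (1/8) h then 1 else 0))"
    proof (rule sum_mono)
      fix h
      show "?P h \<le> 1/3 + (if \<not> far_from_L n (1/8) h then 1 else 0)"
      proof (cases "far_from_L n (1/8) h")
        case True then show ?thesis using T unfolding is_tester_def by auto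
      next
        case False
        have "?P h \<le> 1" by (rule measure_pmf.prob_le_1)
        then show ?thesis unfolding if_P[OF False] by linarith
      qed
    qed
    also have "\<dots> = 2^N / 3 + real (card {h \<in> ?F. \<not> far_from_L n (1/8) h})"
      by (simp add: sum.distrib sum_indicator_card[OF finite_FF] cF)
    finally show ?thesis .
  qed
  have K: "(\<Sum>s\<in>?S. \<Sum>h\<in>?F. ?P (\<lambda>x. h (rho s x))) \<le> real (N - 1) * (\<Sum>h\<in>?F. ?P h) + 2^N * (real q)^2"
  proof -
    have e1: "(\<Sum>s\<in>?S. \<Sum>h\<in>?F. ?P (\<lambda>x. h (rho s x))) =
        measure_pmf.expectation A (\<lambda>D. \<Sum>s\<in>?S. \<Sum>h\<in>?F. ?X (\<lambda>x. h (rho s x)) D)"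
      by (simp add: Pacc Bochner_Integration.integral_sum Bochner_Integration.integrable_sum int)
    have e2: "real (N - 1) * (\<Sum>h\<in>?F. ?P h) + 2^N * (real q)^2 =
        measure_pmf.expectation A (\<lambda>D. real (N - 1) * (\<Sum>h\<in>?F. ?X h D) + 2^N * (real q)^2)"
      by (simp add: Pacc Bochner_Integration.integral_sum Bochner_Integration.integrable_sum int)
    have pw: "(\<Sum>s\<in>?S. \<Sum>h\<in>?F. ?X (\<lambda>x. h (rho s x)) D) \<le> real (N - 1) * (\<Sum>h\<in>?F. ?X h D) + 2^N * (real q)^2" for D
    proof -
      have kd: "(\<Sum>s\<in>?S. card {h \<in> ?F. snd D (answers n D (\<lambda>x. h (rho s x)) q)})
          \<le> (N - 1) * card {h \<in> ?F. snd D (answers n D h q)} + 2 ^ N * q^2"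
        using key_D[of n D q] unfolding N_def .
      then have "real (\<Sum>s\<in>?S. card {h \<in> ?F. snd D (answers n D (\<lambda>x. h (rho s x)) q)})
          \<le> real ((N - 1) * card {h \<in> ?F. snd D (answers n D h q)} + 2 ^ N * q^2)"
        by (rule of_nat_mono)
      then show ?thesis
        by (simp add: sum_indicator_card[OF finite_FF] accepts_def of_nat_sum)
    qed
    show ?thesis unfolding e1 e2
    proof (rule integral_mono)
      show "integrable (measure_pmf A) (\<lambda>D. \<Sum>s\<in>?S. \<Sum>h\<in>?F. ?X (\<lambda>x. h (rho s x)) D)"
        by (rule Bochner_Integration.integrable_sum, rule Bochner_Integration.integrable_sum, rule int)
      show "integrable (measure_pmf A) (\<lambda>D. real (N - 1) * (\<Sum>h\<in>?F. ?X h D) + 2^N * (real q)^2)"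
        by (rule Bochner_Integration.integrable_add, rule Bochner_Integration.integrable_mult_right, rule Bochner_Integration.integrable_sum, rule int, rule measure_pmf.integrable_const)
      show "(\<Sum>s\<in>?S. \<Sum>h\<in>?F. ?X (\<lambda>x. h (rho s x)) D) \<le> real (N - 1) * (\<Sum>h\<in>?F. ?X h D) + 2^N * (real q)^2" for D
        by (rule pw)
    qed
  qed
  have nf: "6 * real (card {h \<in> ?F. \<not> far_from_L n (1/8) h}) \<le> 2^N"
  proof -
    have "6 * card {h \<in> ?F. \<not> far_from_L n (1/8) h} \<le> 2^N"
      using notfar_count[OF n] unfolding N_def .
    then have "real (6 * card {h \<in> ?F. \<not> far_from_L n (1/8) h}) \<le> real (2^N)"
      by (rule of_nat_mono)
    then show ?thesis by simp
  qed
  define M where "M = real (N - 1)"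
  define P where "P = (2::real)^N"
  define nfc where "nfc = real (card {h \<in> ?F. \<not> far_from_L n (1/8) h})"
  have M0: "0 \<le> M" unfolding M_def by simp
  have P0: "0 < P" unfolding P_def by simp
  have main: "M * P * (2/3) \<le> M * (P / 3 + nfc) + P * (real q)^2"
  proof -
    have u': "M * (\<Sum>h\<in>?F. ?P h) \<le> M * (P/3 + nfc)"
      unfolding P_def nfc_def by (rule mult_left_mono[OF U M0])
    show ?thesis using Y K u' unfolding M_def P_def nfc_def by linarith
  qed
  have "M * nfc \<le> M * (P / 6)" using nf M0 unfolding nfc_def P_def by (intro mult_left_mono) auto
  then have "P * (M / 6) \<le> P * (real q)^2" using main by (simp add: algebra_simps)
  then have q2: "M / 6 \<le> (real q)^2" using P0 by simp
  have "real N / 16 \<le> M / 6" unfolding M_def using N2 by (simp add: of_nat_diff)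
  with q2 have "real N / 16 \<le> (real q)^2" by linarith
  then have "sqrt (real N / 16) \<le> sqrt ((real q)^2)" by (rule real_sqrt_le_mono)
  moreover have "sqrt (real N / 16) = 1/4 * sqrt (2^n)"
    unfolding N_def by (simp add: real_sqrt_divide)
  ultimately show "1/4 * sqrt (2^n) \<le> real q" by simp
qed

end
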